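(* Suppose $\{0,1\}^\ell$ admits a code decomposition with chain of parameters $(\ell,k_0,d_0)-(\ell,k_1,d_1)-\dots-(\ell,k_{m-1},d_{m-1})$, and set $k_m=0$. Then there exists a kernel $g$ of dimension $\ell$ whose partial distances satisfy $D_{min}^{(i)}\ge d_j$ for every $j\in\{0,\dots,m-1\}$ and every $i$ with $\ell-k_j\le i\le \ell-1-k_{j+1}$.
   Context: A code decomposition of $\{0,1\}^\ell$ with chain of parameters $(\ell,k_0,d_0)-(\ell,k_1,d_1)-\dots-(\ell,k_{m-1},d_{m-1})$ (integers $\ell=k_0>k_1>\dots>k_{m-1}\ge0$) is a family of nested partitions: level $0$ consists of the single set $\{0,1\}^\ell$, and for $j=1,\dots,m-1$ each set of level $j-1$ is partitioned into equally sized sets forming level $j$; every set at level $j$ has exactly $2^{k_j}$ elements and minimum Hamming distance at least $d_j$ between distinct elements. A kernel of dimension $\ell$ is a bijection $g:\{0,1\}^\ell\to\{0,1\}^\ell$; ${\bf a}\bullet{\bf b}$ denotes concatenation, $d_H$ Hamming distance; its partial distances are $D_{min}^{(i)}=\min\{d_H(g({\bf w}\bullet 0\bullet{\bf u}),g({\bf w}\bullet 1\bullet {\bf v})) : {\bf w}\in\{0,1\}^i,\ {\bf u},{\bf v}\in\{0,1\}^{\ell-i-1}\}$, $i=0,\dots,\ell-1$. *)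

theory Defs
  imports Main
begin

definition words :: "nat \<Rightarrow> bool list set" where
  "words l = {x. length x = l}"

definition hamming :: "bool list \<Rightarrow> bool list \<Rightarrow> nat" where
  "hamming x y = card {i. i < length x \<and> x ! i \<noteq> y ! i}"

definition min_dist_ge :: "bool list set \<Rightarrow> nat \<Rightarrow> bool" where
  "min_dist_ge S d = (\<forall>x\<in>S. \<forall>y\<in>S. x \<noteq> y \<longrightarrow> hamming x y \<ge> d)"

definition is_partition :: "bool list set set \<Rightarrow> bool list set \<Rightarrow> bool" where
  "is_partition Q X = ((\<forall>T\<in>Q. T \<noteq> {}) \<and> \<Union>Q = X \<and>
      (\<forall>T1\<in>Q. \<forall>T2\<in>Q. T1 \<noteq> T2 \<longrightarrow> T1 \<inter> T2 = {}))"

definition code_decomposition ::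
  "nat \<Rightarrow> nat \<Rightarrow> (nat \<Rightarrow> nat) \<Rightarrow> (nat \<Rightarrow> nat) \<Rightarrow> (nat \<Rightarrow> bool list set set) \<Rightarrow> bool" where
  "code_decomposition l m k d P =
     (m \<ge> 1 \<and> k 0 = l \<and> (\<forall>j. j + 1 < m \<longrightarrow> k (j + 1) < k j) \<and>
      P 0 = {words l} \<and>
      (\<forall>j. 1 \<le> j \<and> j < m \<longrightarrow>
         (\<forall>S\<in>P (j - 1). is_partition {T\<in>P j. T \<subseteq> S} S) \<and>
         (\<forall>T\<in>P j. \<exists>S\<in>P (j - 1). T \<subseteq> S)) \<and>
      (\<forall>j<m. \<forall>S\<in>P j. card S = 2 ^ k j \<and> min_dist_ge S (d j)))"

definition is_kernel :: "nat \<Rightarrow> (bool list \<Rightarrow> bool list) \<Rightarrow> bool" where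
  "is_kernel l g = bij_betw g (words l) (words l)"

definition Dmin :: "nat \<Rightarrow> (bool list \<Rightarrow> bool list) \<Rightarrow> nat \<Rightarrow> nat" where
  "Dmin l g i = Min {hamming (g (w @ [False] @ u)) (g (w @ [True] @ v)) | w u v.
       w \<in> words i \<and> u \<in> words (l - i - 1) \<and> v \<in> words (l - i - 1)}"

end

theory Submission
  imports Defs
begin

lemma words_fin_card: "finite (words n) \<and> card (words n) = 2 ^ n"
proof -
  have e: "words n = {xs. set xs \<subseteq> (UNIV::bool set) \<and> length xs = n}"
    by (auto simp: words_def)
  show ?thesis unfolding e
    using finite_lists_length_eq[of "UNIV::bool set" n] card_lists_length_eq[of "UNIV::bool set" n]
    by (simp add: card_UNIV_bool)
qed

lemma hamming_le: "hamming x y \<le> length x"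
proof -
  have "{i. i < length x \<and> x ! i \<noteq> y ! i} \<subseteq> {..<length x}" by auto
  then show ?thesis unfolding hamming_def using card_mono[of "{..<length x}"] by fastforce
qed

lemma cd_D: assumes "code_decomposition l m k d P"
  shows "m \<ge> 1" "k 0 = l" "\<forall>j. j + 1 < m \<longrightarrow> k (j + 1) < k j" "P 0 = {words l}"
   "\<forall>j. 1 \<le> j \<and> j < m \<longrightarrow>
         (\<forall>S\<in>P (j - 1). is_partition {T\<in>P j. T \<subseteq> S} S) \<and>
         (\<forall>T\<in>P j. \<exists>S\<in>P (j - 1). T \<subseteq> S)"
   "\<forall>j<m. \<forall>S\<in>P j. card S = 2 ^ k j \<and> min_dist_ge S (d j)"
proof -
  note c = assms[unfolded code_decomposition_def]
  show "m \<ge> 1" using c by (rule conjunct1)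
  show "k 0 = l" using c[THEN conjunct2] by (rule conjunct1)
  show "\<forall>j. j + 1 < m \<longrightarrow> k (j + 1) < k j" using c[THEN conjunct2, THEN conjunct2] by (rule conjunct1)
  show "P 0 = {words l}" using c[THEN conjunct2, THEN conjunct2, THEN conjunct2] by (rule conjunct1)
  show "\<forall>j. 1 \<le> j \<and> j < m \<longrightarrow>
         (\<forall>S\<in>P (j - 1). is_partition {T\<in>P j. T \<subseteq> S} S) \<and>
         (\<forall>T\<in>P j. \<exists>S\<in>P (j - 1). T \<subseteq> S)"
    using c[THEN conjunct2, THEN conjunct2, THEN conjunct2, THEN conjunct2] by (rule conjunct1)
  show "\<forall>j<m. \<forall>S\<in>P j. card S = 2 ^ k j \<and> min_dist_ge S (d j)"
    using c[THEN conjunct2, THEN conjunct2, THEN conjunct2, THEN conjunct2] by (rule conjunct2)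
qed
lemma cd_dec: "code_decomposition l m k d P \<Longrightarrow> j + 1 < m \<Longrightarrow> k (j + 1) < k j"
  using cd_D(3) by blast
lemma cd_card: "code_decomposition l m k d P \<Longrightarrow> j < m \<Longrightarrow> S \<in> P j \<Longrightarrow> card S = 2 ^ k j"
  using cd_D(6) by blast
lemma cd_dist: "code_decomposition l m k d P \<Longrightarrow> j < m \<Longrightarrow> S \<in> P j \<Longrightarrow> min_dist_ge S (d j)"
  using cd_D(6) by blast
lemma cd_part: "code_decomposition l m k d P \<Longrightarrow> Suc j < m \<Longrightarrow> S \<in> P j \<Longrightarrow> is_partition {T\<in>P (Suc j). T \<subseteq> S} S"
proof -
  assume a: "code_decomposition l m k d P" "Suc j < m" "S \<in> P j"
  have "1 \<le> Suc j \<and> Suc j < m" using a(2) by simp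
  then have "\<forall>S\<in>P (Suc j - 1). is_partition {T\<in>P (Suc j). T \<subseteq> S} S" using cd_D(5)[OF a(1)] by blast
  then show ?thesis using a(3) by simp
qed

definition good where
  "good m k P j S h \<longleftrightarrow> bij_betw h (words (k j)) S \<and>
     (\<forall>j'. j \<le> j' \<and> j' < m \<longrightarrow> (\<forall>x\<in>words (k j). \<forall>y\<in>words (k j).
        take (k j - k j') x = take (k j - k j') y \<longrightarrow> (\<exists>T\<in>P j'. h x \<in> T \<and> h y \<in> T)))"

lemma good_bij: "good m k P j S h \<Longrightarrow> bij_betw h (words (k j)) S"
  unfolding good_def by (rule conjunct1)

lemma good_prop: assumes "good m k P j S h" "j \<le> j'" "j' < m" "x \<in> words (k j)" "y \<in> words (k j)"
   "take (k j - k j') x = take (k j - k j') y"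
  shows "\<exists>T\<in>P j'. h x \<in> T \<and> h y \<in> T"
proof -
  have "\<forall>j'. j \<le> j' \<and> j' < m \<longrightarrow> (\<forall>x\<in>words (k j). \<forall>y\<in>words (k j).
        take (k j - k j') x = take (k j - k j') y \<longrightarrow> (\<exists>T\<in>P j'. h x \<in> T \<and> h y \<in> T))"
    using assms(1) unfolding good_def by (rule conjunct2)
  then have "\<forall>x\<in>words (k j). \<forall>y\<in>words (k j).
        take (k j - k j') x = take (k j - k j') y \<longrightarrow> (\<exists>T\<in>P j'. h x \<in> T \<and> h y \<in> T)"
    using assms(2,3) by simp
  then show ?thesis using assms(4-6) by simp
qed

lemma good_intro: "bij_betw h (words (k j)) S \<Longrightarrow> (\<forall>j'. j \<le> j' \<and> j' < m \<longrightarrow> (\<forall>x\<in>words (k j). \<forall>y\<in>words (k j).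
        take (k j - k j') x = take (k j - k j') y \<longrightarrow> (\<exists>T\<in>P j'. h x \<in> T \<and> h y \<in> T))) \<Longrightarrow> good m k P j S h"
  unfolding good_def by (rule conjI)

lemma k_mono:
  assumes "code_decomposition l m k d P" "j \<le> j'" "j' < m"
  shows "k j' \<le> k j"
  using assms(2,3)
proof (induction j' rule: dec_induct)
  case base then show ?case by simp
next
  case (step n)
  then have "k (Suc n) < k n" using cd_dec[OF assms(1), of n] by simp
  then show ?case using step by simp
qed

lemma step_lemma:
  assumes cd: "code_decomposition l m k d P" and jm: "Suc j < m"
    and IH: "\<forall>T\<in>P (Suc j). \<exists>h. good m k P (Suc j) T h"
    and S: "S \<in> P j"
  shows "\<exists>h. good m k P j S h"
proof -
  define C where "C = {T\<in>P (Suc j). T \<subseteq> S}"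
  have part: "is_partition C S" using cd_part[OF cd jm S] unfolding C_def .
  have cS: "card S = 2 ^ k j" using cd_card[OF cd _ S] jm by simp
  have cT: "\<And>T. T \<in> C \<Longrightarrow> card T = 2 ^ k (Suc j)"
    using cd_card[OF cd jm] unfolding C_def by blast
  have finS: "finite S" using cS by (metis card.infinite power_not_zero zero_neq_numeral)
  have "C \<subseteq> Pow S" by (auto simp: C_def)
  then have finC: "finite C" using finS finite_subset by blast
  have kk: "k (Suc j) < k j" using cd_dec[OF cd, of j] jm by simp
  define a where "a = k j - k (Suc j)"
  have disj: "pairwise disjnt C" using part unfolding is_partition_def pairwise_def disjnt_def by blast
  have uni: "\<Union>C = S" using part unfolding is_partition_def by blast
  have "card S = sum card C" using card_Union_disjoint[OF disj] uni finS
    by (metis Union_upper finite_subset)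
  also have "\<dots> = card C * 2 ^ k (Suc j)" using cT by simp
  finally have "2 ^ a * 2 ^ k (Suc j) = card C * (2::nat) ^ k (Suc j)"
    using cS kk by (simp add: a_def power_add[symmetric])
  then have cC: "card C = 2 ^ a" by simp
  obtain phi where phi: "bij_betw phi (words a) C"
    using finite_same_card_bij[of "words a" C] words_fin_card[of a] finC cC by auto
  have "\<forall>T\<in>C. \<exists>h. good m k P (Suc j) T h" using IH unfolding C_def by simp
  then obtain H where H0: "\<forall>T\<in>C. good m k P (Suc j) T (H T)" using bchoice by blast
  have H: "\<And>T. T \<in> C \<Longrightarrow> good m k P (Suc j) T (H T)" using H0 by blast
  define h where "h x = H (phi (take a x)) (drop a x)" for x
  have wsplit: "\<And>x. x \<in> words (k j) \<Longrightarrow> take a x \<in> words a \<and> drop a x \<in> words (k (Suc j))"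
    using kk by (auto simp: words_def a_def)
  have inC: "\<And>x. x \<in> words (k j) \<Longrightarrow> phi (take a x) \<in> C"
    using phi wsplit bij_betwE by blast
  have hT: "\<And>x. x \<in> words (k j) \<Longrightarrow> h x \<in> phi (take a x)"
  proof -
    fix x assume x: "x \<in> words (k j)"
    have "bij_betw (H (phi (take a x))) (words (k (Suc j))) (phi (take a x))"
      using good_bij[OF H[OF inC[OF x]]] .
    then show "h x \<in> phi (take a x)" unfolding h_def using wsplit[OF x] bij_betwE by blast
  qed
  have bij: "bij_betw h (words (k j)) S"
    unfolding bij_betw_def
  proof (intro conjI)
    show "inj_on h (words (k j))"
    proof (rule inj_onI)
      fix x y assume x: "x \<in> words (k j)" and y: "y \<in> words (k j)" and e: "h x = h y"
      have "phi (take a x) = phi (take a y)"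
      proof (rule ccontr)
        assume ne: "phi (take a x) \<noteq> phi (take a y)"
        have "\<forall>T1\<in>C. \<forall>T2\<in>C. T1 \<noteq> T2 \<longrightarrow> T1 \<inter> T2 = {}"
          using part unfolding is_partition_def by blast
        then have dj: "phi (take a x) \<inter> phi (take a y) = {}" using ne inC[OF x] inC[OF y] by simp
        have "h x \<in> phi (take a y)" using hT[OF y] e by simp
        then show False using hT[OF x] dj by blast
      qed
      moreover have "inj_on phi (words a)" using phi unfolding bij_betw_def by simp
      ultimately have tx: "take a x = take a y"
        using wsplit[OF x] wsplit[OF y] inj_onD by metis
      then have "H (phi (take a x)) (drop a x) = H (phi (take a x)) (drop a y)"
        using e by (simp add: h_def)
      moreover have "inj_on (H (phi (take a x))) (words (k (Suc j)))"
        using good_bij[OF H[OF inC[OF x]]] by (rule bij_betw_imp_inj_on)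
      ultimately have "drop a x = drop a y"
        using wsplit[OF x] wsplit[OF y] by (simp add: inj_on_eq_iff)
      then show "x = y" using tx by (metis append_take_drop_id)
    qed
  next
    show "h ` words (k j) = S"
    proof
      show "h ` words (k j) \<subseteq> S" using hT inC unfolding C_def by blast
    next
      show "S \<subseteq> h ` words (k j)"
      proof
        fix s assume "s \<in> S"
        then obtain T where T: "T \<in> C" "s \<in> T" using uni by blast
        have "T \<in> phi ` words a" using bij_betw_imp_surj_on[OF phi] T(1) by simp
        then obtain x1 where x1: "x1 \<in> words a" "phi x1 = T" by blast
        obtain x2 where x2: "x2 \<in> words (k (Suc j))" "H T x2 = s"
        proof -
          have "s \<in> H T ` words (k (Suc j))" using bij_betw_imp_surj_on[OF good_bij[OF H[OF T(1)]]] T(2) by simp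
          then show ?thesis using that by auto
        qed
        have "x1 @ x2 \<in> words (k j)" using x1 x2 kk by (auto simp: words_def a_def)
        moreover have "h (x1 @ x2) = s" using x1 x2 by (simp add: h_def words_def)
        ultimately show "s \<in> h ` words (k j)" by blast
      qed
    qed
  qed
  have prp: "\<forall>j'. j \<le> j' \<and> j' < m \<longrightarrow> (\<forall>x\<in>words (k j). \<forall>y\<in>words (k j).
        take (k j - k j') x = take (k j - k j') y \<longrightarrow> (\<exists>T\<in>P j'. h x \<in> T \<and> h y \<in> T))"
  proof (intro allI impI ballI)
    fix j' x y assume jj: "j \<le> j' \<and> j' < m" and x: "x \<in> words (k j)" and y: "y \<in> words (k j)"
      and t: "take (k j - k j') x = take (k j - k j') y"
    show "\<exists>T\<in>P j'. h x \<in> T \<and> h y \<in> T"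
    proof (cases "j' = j")
      case True
      have "h x \<in> S" "h y \<in> S" using bij_betwE[OF bij] x y by blast+
      then show ?thesis using S True by blast
    next
      case False
      then have jj2: "Suc j \<le> j'" using jj by simp
      have kle: "k j' \<le> k (Suc j)" using k_mono[OF cd jj2] jj by simp
      have ta: "take a x = take a y" using t kle kk
        by (metis a_def diff_le_mono2 min.absorb1 take_take)
      have n: "k (Suc j) - k j' + a = k j - k j'" using kle kk by (simp add: a_def)
      have td: "take (k (Suc j) - k j') (drop a x) = take (k (Suc j) - k j') (drop a y)"
        using t by (simp add: take_drop n)
      have "\<exists>T\<in>P j'. H (phi (take a x)) (drop a x) \<in> T \<and> H (phi (take a x)) (drop a y) \<in> T"
        using good_prop[OF H[OF inC[OF x]] jj2 _ conjunct2[OF wsplit[OF x]] conjunct2[OF wsplit[OF y]] td] jj by blast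
      then show ?thesis using ta by (simp add: h_def)
    qed
  qed
  show ?thesis using good_intro[OF bij prp] by blast
qed

lemma base_lemma:
  assumes cd: "code_decomposition l m k d P" and jm: "j < m" and S: "S \<in> P j"
    and h: "bij_betw h (words (k j)) S" and last: "\<forall>j'. j \<le> j' \<and> j' < m \<longrightarrow> j' = j"
  shows "good m k P j S h"
proof (rule good_intro[where k=k and j=j, OF h], intro allI impI ballI)
  fix j' x y assume a: "j \<le> j' \<and> j' < m" "x \<in> words (k j)" "y \<in> words (k j)"
  have "j' = j" using a(1) last by blast
  moreover have "h x \<in> S" "h y \<in> S" using bij_betwE[OF h] a(2,3) by blast+
  ultimately have "j' = j" "h x \<in> S" "h y \<in> S" by blast+
  then show "\<exists>T\<in>P j'. h x \<in> T \<and> h y \<in> T" using S by blast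
qed

lemma all_good:
  assumes cd: "code_decomposition l m k d P" and jm: "j < m"
  shows "\<forall>S\<in>P j. \<exists>h. good m k P j S h"
proof -
  have j1: "j \<le> m - 1" using jm by simp
  show ?thesis using j1
  proof (induction j rule: inc_induct)
    case base
    show ?case
    proof
      fix S assume S: "S \<in> P (m - 1)"
      have m1: "m - 1 < m" using jm by simp
      have cS: "card S = 2 ^ k (m - 1)" using cd_card[OF cd m1 S] .
      have finS: "finite S" using cS by (metis card.infinite power_not_zero zero_neq_numeral)
      obtain h where "bij_betw h (words (k (m-1))) S"
        using finite_same_card_bij[of "words (k (m-1))" S] words_fin_card finS cS by auto
      then show "\<exists>h. good m k P (m - 1) S h"
        using base_lemma[OF cd m1 S] by fastforce
    qed
  next
    case (step n)
    show ?case using step_lemma[OF cd _ step.IH] step.hyps by auto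
  qed
qed

theorem mainTheorem9:
  fixes l m :: nat and k d :: "nat \<Rightarrow> nat" and P :: "nat \<Rightarrow> bool list set set"
  assumes "code_decomposition l m k d P"
  shows "\<exists>g. is_kernel l g \<and>
    (\<forall>j<m. \<forall>i. l \<le> i + k j \<and> i + 1 + (if j + 1 = m then 0 else k (j + 1)) \<le> l
        \<longrightarrow> Dmin l g i \<ge> d j)"
proof -
  note cd = assms
  have m0: "0 < m" and k0: "k 0 = l" and P0: "P 0 = {words l}"
    using cd_D(1,2,4)[OF cd] by auto
  obtain g where g: "good m k P 0 (words l) g" using all_good[OF cd m0] P0 by auto
  have bij: "bij_betw g (words l) (words l)" using good_bij[OF g] k0 by simp
  have pr: "\<And>j x y. j < m \<Longrightarrow> x \<in> words l \<Longrightarrow> y \<in> words l \<Longrightarrow> take (l - k j) x = take (l - k j) y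
      \<Longrightarrow> \<exists>T\<in>P j. g x \<in> T \<and> g y \<in> T"
  proof -
    fix j x y assume "j < m" "x \<in> words l" "y \<in> words l" "take (l - k j) x = take (l - k j) y"
    then show "\<exists>T\<in>P j. g x \<in> T \<and> g y \<in> T" using good_prop[OF g, of j x y] k0 by simp
  qed
  show ?thesis
  proof (intro exI conjI allI impI)
    show "is_kernel l g" using bij by (simp add: is_kernel_def)
  next
    fix j i assume jm: "j < m" and ii: "l \<le> i + k j \<and> i + 1 + (if j + 1 = m then 0 else k (j + 1)) \<le> l"
    have il: "i < l" using ii by simp
    define A where "A = {hamming (g (w @ [False] @ u)) (g (w @ [True] @ v)) | w u v.
       w \<in> words i \<and> u \<in> words (l - i - 1) \<and> v \<in> words (l - i - 1)}"
    have all: "\<forall>a\<in>A. d j \<le> a"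
    proof
      fix a assume "a \<in> A"
      then obtain w u v where a: "a = hamming (g (w @ [False] @ u)) (g (w @ [True] @ v))"
        and w: "w \<in> words i" and u: "u \<in> words (l - i - 1)" and v: "v \<in> words (l - i - 1)"
        unfolding A_def by blast
      let ?x = "w @ [False] @ u" and ?y = "w @ [True] @ v"
      have x: "?x \<in> words l" and y: "?y \<in> words l" using w u v il by (auto simp: words_def)
      have lwi: "length w = i" using w by (simp add: words_def)
      have lw: "l - k j \<le> length w" using lwi ii by linarith
      have "take (l - k j) ?x = take (l - k j) ?y" using lw by simp
      then obtain T where T: "T \<in> P j" "g ?x \<in> T" "g ?y \<in> T" using pr[OF jm x y] by blast
      have "?x \<noteq> ?y" by simp
      then have "g ?x \<noteq> g ?y" using bij x y unfolding bij_betw_def inj_on_def by blast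
      moreover have "min_dist_ge T (d j)" using cd_dist[OF cd jm T(1)] .
      ultimately show "d j \<le> a" using T a unfolding min_dist_ge_def by blast
    qed
    have ne: "A \<noteq> {}"
    proof -
      have "replicate i False \<in> words i" "replicate (l-i-1) False \<in> words (l - i - 1)"
        by (auto simp: words_def)
      then show ?thesis unfolding A_def by blast
    qed
    have fin: "finite A"
    proof -
      have "A \<subseteq> {..l}"
      proof
        fix a assume "a \<in> A"
        then obtain w u v where a: "a = hamming (g (w @ [False] @ u)) (g (w @ [True] @ v))"
          and w: "w \<in> words i" and u: "u \<in> words (l - i - 1)"
          unfolding A_def by blast
        have x: "w @ [False] @ u \<in> words l" using w u il by (auto simp: words_def)
        then have "g (w @ [False] @ u) \<in> words l"
          using bij bij_betwE by blast
        then have "length (g (w @ [False] @ u)) = l" by (simp add: words_def)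
        then show "a \<in> {..l}" using a hamming_le by (metis atMost_iff)
      qed
      then show ?thesis using finite_subset by blast
    qed
    have "d j \<le> Min A" using all ne fin by simp
    then show "Dmin l g i \<ge> d j" by (simp add: Dmin_def A_def)
  qed
qed

end
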